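(* Let $p>1$ and let $s,q,V:\mathbb{R}^3\to(0,\infty)$ be radially symmetric $C^2$-functions. Suppose $U(x,t)=\psi(|x|,t)\frac{x}{|x|}$, with $\psi:[0,\infty)\times\mathbb{R}\to\mathbb{R}$, is a ($C^2$) solution of $$s(x)\partial_t^2U+\nabla\times\nabla\times U+q(x)U\pm V(x)|U|^{p-1}U=0\quad\text{on }\mathbb{R}^3\times\mathbb{R}.$$ Let $a:\mathbb{R}^3\to\mathbb{R}$ be a radially symmetric $C^2$-function. Then $U_a(x,t):=U(x,t+a(x))$ also solves the same equation (with the same sign).
   Context: A function $f:\mathbb{R}^3\to\mathbb{R}$ is radially symmetric if $f(x)$ depends only on $|x|$. *)

theory Defs
  imports "HOL-Analysis.Analysis"
begin

definition radial :: "(real^3 \<Rightarrow> 'b) \<Rightarrow> bool" where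
  "radial f \<longleftrightarrow> (\<forall>x y. norm x = norm y \<longrightarrow> f x = f y)"

definition C2 :: "('a::euclidean_space \<Rightarrow> 'b::real_normed_vector) \<Rightarrow> bool" where
  "C2 F \<longleftrightarrow> (\<exists>(DF :: 'a \<Rightarrow> 'a \<Rightarrow>\<^sub>L 'b) (D2F :: 'a \<Rightarrow> 'a \<Rightarrow>\<^sub>L ('a \<Rightarrow>\<^sub>L 'b)).
      (\<forall>z. (F has_derivative blinfun_apply (DF z)) (at z)) \<and>
      (\<forall>z. (DF has_derivative blinfun_apply (D2F z)) (at z)) \<and>
      continuous_on UNIV D2F)"

definition pd :: "3 \<Rightarrow> (real^3 \<Rightarrow> real^3) \<Rightarrow> real^3 \<Rightarrow> real^3" where
  "pd i F x = vector_derivative (\<lambda>h. F (x + h *\<^sub>R axis i 1)) (at 0)"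

definition curl :: "(real^3 \<Rightarrow> real^3) \<Rightarrow> real^3 \<Rightarrow> real^3" where
  "curl F x = vector [ pd 2 F x $ 3 - pd 3 F x $ 2,
                       pd 3 F x $ 1 - pd 1 F x $ 3,
                       pd 1 F x $ 2 - pd 2 F x $ 1 ]"

definition dtt :: "(real^3 \<Rightarrow> real \<Rightarrow> real^3) \<Rightarrow> real^3 \<Rightarrow> real \<Rightarrow> real^3" where
  "dtt U x t = vector_derivative (\<lambda>\<tau>. vector_derivative (\<lambda>\<sigma>. U x \<sigma>) (at \<tau>)) (at t)"

definition is_solution ::
  "(real^3 \<Rightarrow> real) \<Rightarrow> (real^3 \<Rightarrow> real) \<Rightarrow> (real^3 \<Rightarrow> real) \<Rightarrow> real \<Rightarrow> real
     \<Rightarrow> (real^3 \<Rightarrow> real \<Rightarrow> real^3) \<Rightarrow> bool" where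
  "is_solution s q V p sg U \<longleftrightarrow>
     C2 (\<lambda>(x, t). U x t) \<and>
     (\<forall>x t. s x *\<^sub>R dtt U x t + curl (curl (\<lambda>y. U y t)) x + q x *\<^sub>R U x t
            + (sg * V x * norm (U x t) powr (p - 1)) *\<^sub>R U x t = 0)"

end

theory Submission
  imports Defs
begin

type_synonym v3 = "real^3"
type_synonym st = "v3 \<times> real"

lemma C2_shift:
  fixes F :: "st \<Rightarrow> v3" and a :: "v3 \<Rightarrow> real"
  assumes "C2 F" "C2 a"
  shows "C2 (\<lambda>z. F (fst z, snd z + a (fst z)))"
proof -
  obtain DF :: "st \<Rightarrow> (st) \<Rightarrow>\<^sub>L v3" and D2F where
    dF: "\<And>z. (F has_derivative blinfun_apply (DF z)) (at z)" and
    d2F: "\<And>z. (DF has_derivative blinfun_apply (D2F z)) (at z)" and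
    cF: "continuous_on UNIV D2F"
    using assms(1) unfolding C2_def by blast
  obtain Da :: "v3 \<Rightarrow> v3 \<Rightarrow>\<^sub>L real" and D2a where
    da: "\<And>z. (a has_derivative blinfun_apply (Da z)) (at z)" and
    d2a: "\<And>z. (Da has_derivative blinfun_apply (D2a z)) (at z)" and
    ca: "continuous_on UNIV D2a"
    using assms(2) unfolding C2_def by blast
  define E :: "real \<Rightarrow>\<^sub>L (st)" where "E = Blinfun (\<lambda>r. (0, r))"
  have blE: "bounded_linear (\<lambda>r::real. (0::v3, r))"
    by (intro bounded_linear_Pair bounded_linear_zero bounded_linear_ident)
  have E_apply: "blinfun_apply E r = (0, r)" for r
    unfolding E_def using blE by (simp add: bounded_linear_Blinfun_apply)
  define L :: "(v3 \<Rightarrow>\<^sub>L real) \<Rightarrow> (st) \<Rightarrow>\<^sub>L (st)"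
    where "L M = E o\<^sub>L (M o\<^sub>L fst_blinfun)" for M
  have L_apply: "blinfun_apply (L M) h = (0, M (fst h))" for M h
    by (simp add: L_def E_apply)
  have blL: "bounded_linear L"
    unfolding L_def
    by (rule bounded_linear_compose[OF bounded_bilinear.bounded_linear_right[OF bounded_bilinear_blinfun_compose]
          bounded_bilinear.bounded_linear_left[OF bounded_bilinear_blinfun_compose]])
  define T where "T z = (fst z, snd z + a (fst z))" for z :: "st"
  define DT where "DT z = id_blinfun + L (Da (fst z))" for z :: "st"
  have DT_apply: "blinfun_apply (DT z) h = (fst h, snd h + Da (fst z) (fst h))" for z h
    by (cases h) (simp add: DT_def blinfun.add_left L_apply)
  have dafst: "((\<lambda>z. a (fst z)) has_derivative (\<lambda>h. Da (fst z) (fst h))) (at z)" for z :: "st"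
    by (rule has_derivative_compose[OF has_derivative_fst[OF has_derivative_ident] da])
  have d2afst: "((\<lambda>z. Da (fst z)) has_derivative (\<lambda>h. D2a (fst z) (fst h))) (at z)" for z :: "st"
    by (rule has_derivative_compose[OF has_derivative_fst[OF has_derivative_ident] d2a])
  have dT: "(T has_derivative blinfun_apply (DT z)) (at z)" for z
    unfolding T_def DT_apply
    by (intro has_derivative_Pair has_derivative_add has_derivative_fst has_derivative_snd has_derivative_ident dafst)
  have dDT: "(DT has_derivative (\<lambda>h. L (D2a (fst z) (fst h)))) (at z)" for z
    unfolding DT_def
    using has_derivative_add[OF has_derivative_const[of id_blinfun] bounded_linear.has_derivative[OF blL d2afst]]
    by simp
  define DG where "DG z = DF (T z) o\<^sub>L DT z" for z
  have dG: "((\<lambda>z. F (T z)) has_derivative blinfun_apply (DG z)) (at z)" for z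
    unfolding DG_def using has_derivative_compose[OF dT[of z] dF[of "T z"]] by (simp add: blinfun_compose.rep_eq comp_def)
  have dDFT: "((\<lambda>z. DF (T z)) has_derivative (\<lambda>h. D2F (T z) (DT z h))) (at z)" for z
    using has_derivative_compose[OF dT d2F] .
  have dDG: "(DG has_derivative (\<lambda>h. (DF (T z) o\<^sub>L L (D2a (fst z) (fst h))) + (D2F (T z) (DT z h) o\<^sub>L DT z))) (at z)" for z
    unfolding DG_def[abs_def]
    by (rule bounded_bilinear.FDERIV[OF bounded_bilinear_blinfun_compose dDFT dDT])
  define D2G where "D2G z = Blinfun (\<lambda>h. (DF (T z) o\<^sub>L L (D2a (fst z) (fst h))) + (D2F (T z) (DT z h) o\<^sub>L DT z))" for z
  have D2G_apply: "blinfun_apply (D2G z) = (\<lambda>h. (DF (T z) o\<^sub>L L (D2a (fst z) (fst h))) + (D2F (T z) (DT z h) o\<^sub>L DT z))" for z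
    unfolding D2G_def by (rule bounded_linear_Blinfun_apply[OF has_derivative_bounded_linear[OF dDG]])
  have cont: "continuous_on UNIV f" if "\<And>z. (f has_derivative f' z) (at z)" for f :: "'x::real_normed_vector \<Rightarrow> 'y::real_normed_vector" and f'
    using that by (meson continuous_at_imp_continuous_on has_derivative_continuous)
  have cT: "continuous_on UNIV T" by (rule cont[OF dT])
  have cDF: "continuous_on UNIV DF" by (rule cont[OF d2F])
  have cDa: "continuous_on UNIV Da" by (rule cont[OF d2a])
  have cDFT: "continuous_on UNIV (\<lambda>z. DF (T z))"
    by (rule continuous_on_compose2[OF cDF cT]) auto
  have cD2FT: "continuous_on UNIV (\<lambda>z. D2F (T z))"
    by (rule continuous_on_compose2[OF cF cT]) auto
  have cDafst: "continuous_on UNIV (\<lambda>z::st. Da (fst z))"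
    by (rule continuous_on_compose2[OF cDa continuous_on_fst[OF continuous_on_id]]) auto
  have cD2afst: "continuous_on UNIV (\<lambda>z::st. D2a (fst z))"
    by (rule continuous_on_compose2[OF ca continuous_on_fst[OF continuous_on_id]]) auto
  have cDT: "continuous_on UNIV DT"
    unfolding DT_def
    by (intro continuous_on_add continuous_on_const bounded_linear.continuous_on[OF blL cDafst])
  have cD2G: "continuous_on UNIV D2G"
  proof (rule continuous_on_blinfun_componentwise)
    fix i :: "st"
    have c1: "continuous_on UNIV (\<lambda>z::st. L (D2a (fst z) (fst i)))"
      by (intro bounded_linear.continuous_on[OF blL] continuous_intros cD2afst)
    have c2: "continuous_on UNIV (\<lambda>z. blinfun_apply (DT z) i)"
      by (intro continuous_intros cDT)
    show "continuous_on UNIV (\<lambda>z. blinfun_apply (D2G z) i)"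
      unfolding D2G_apply
      by (intro continuous_intros c1 c2 cDFT cD2FT cDT)
  qed
  show ?thesis
    unfolding C2_def T_def[symmetric]
    using dG dDG[unfolded D2G_apply[symmetric]] cD2G by blast
qed

lemma pd_eq:
  assumes "(G has_derivative D) (at x)"
  shows "pd i G x = D (axis i 1)"
proof -
  have lin: "linear D" using has_derivative_linear[OF assms] .
  have d1: "((\<lambda>h::real. x + h *\<^sub>R axis i 1) has_derivative (\<lambda>h. h *\<^sub>R axis i 1)) (at 0)"
    by (auto intro!: derivative_eq_intros)
  have "(G has_derivative D) (at (x + 0 *\<^sub>R axis i (1::real)))" using assms by simp
  from has_derivative_compose[OF d1 this]
  have "((\<lambda>h. G (x + h *\<^sub>R axis i 1)) has_vector_derivative D (axis i 1)) (at 0)"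
    unfolding has_vector_derivative_def using linear_scale[OF lin] by simp
  then show ?thesis unfolding pd_def by (rule vector_derivative_at)
qed

lemma vd_shift_iff:
  fixes f :: "real \<Rightarrow> 'b::real_normed_vector"
  shows "((\<lambda>\<sigma>. f (\<sigma> + c)) has_vector_derivative f') (at \<tau>) \<longleftrightarrow> (f has_vector_derivative f') (at (\<tau> + c))"
proof
  assume h: "((\<lambda>\<sigma>. f (\<sigma> + c)) has_vector_derivative f') (at \<tau>)"
  have "((\<lambda>\<sigma>::real. \<sigma> - c) has_vector_derivative 1) (at (\<tau> + c))"
    by (auto intro!: derivative_eq_intros)
  from vector_diff_chain_at[OF this] h
  have "(((\<lambda>\<sigma>. f (\<sigma> + c)) \<circ> (\<lambda>\<sigma>. \<sigma> - c)) has_vector_derivative f') (at (\<tau> + c))" by simp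
  then show "(f has_vector_derivative f') (at (\<tau> + c))" by (simp add: o_def)
next
  assume h: "(f has_vector_derivative f') (at (\<tau> + c))"
  have "((\<lambda>\<sigma>::real. \<sigma> + c) has_vector_derivative 1) (at \<tau>)"
    by (auto intro!: derivative_eq_intros)
  from vector_diff_chain_at[OF this] h
  show "((\<lambda>\<sigma>. f (\<sigma> + c)) has_vector_derivative f') (at \<tau>)" by (simp add: o_def)
qed

lemma vd_shift:
  fixes f :: "real \<Rightarrow> 'b::real_normed_vector"
  shows "vector_derivative (\<lambda>\<sigma>. f (\<sigma> + c)) (at \<tau>) = vector_derivative f (at (\<tau> + c))"
  unfolding vector_derivative_def vd_shift_iff ..

lemma dtt_shift: "dtt (\<lambda>x t. U x (t + a x)) x t = dtt U x (t + a x)"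
proof -
  have "(\<lambda>\<tau>. vector_derivative (\<lambda>\<sigma>. U x (\<sigma> + a x)) (at \<tau>)) =
        (\<lambda>\<tau>. vector_derivative (\<lambda>\<sigma>. U x \<sigma>) (at (\<tau> + a x)))"
    using vd_shift[of "\<lambda>\<sigma>. U x \<sigma>"] by simp
  then show ?thesis unfolding dtt_def
    using vd_shift[of "\<lambda>\<tau>. vector_derivative (\<lambda>\<sigma>. U x \<sigma>) (at \<tau>)" "a x" t] by simp
qed

lemma radial_deriv:
  fixes f :: "v3 \<Rightarrow> real"
  assumes rad: "radial f" and df: "(f has_derivative f') (at x)" and x: "x \<noteq> 0"
  shows "f' h = (h \<bullet> sgn x) * f' (sgn x)"
proof -
  define v where "v = sgn x"
  define g where "g r = f (r *\<^sub>R v)" for r :: real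
  have nv: "norm v = 1" using x by (simp add: v_def norm_sgn)
  have fg: "f = (\<lambda>y. g (norm y))"
  proof
    fix y show "f y = g (norm y)"
      unfolding g_def using rad nv unfolding radial_def by (metis norm_scaleR abs_norm_cancel mult.right_neutral)
  qed
  have xv: "norm x *\<^sub>R v = x" using x by (simp add: v_def sgn_div_norm)
  have d1: "((\<lambda>r::real. r *\<^sub>R v) has_derivative (\<lambda>r. r *\<^sub>R v)) (at (norm x))"
    by (auto intro!: derivative_eq_intros)
  have "(f has_derivative f') (at (norm x *\<^sub>R v))" using df xv by simp
  from has_derivative_compose[OF d1 this]
  have dg: "(g has_derivative (\<lambda>r. f' (r *\<^sub>R v))) (at (norm x))" unfolding g_def .
  from has_derivative_compose[OF has_derivative_norm[OF x] dg]
  have "(f has_derivative (\<lambda>h. f' ((h \<bullet> sgn x) *\<^sub>R v))) (at x)" unfolding fg .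
  from has_derivative_unique[OF df this]
  have "f' h = f' ((h \<bullet> sgn x) *\<^sub>R v)" by metis
  also have "\<dots> = (h \<bullet> sgn x) * f' v"
    using linear_scale[OF has_derivative_linear[OF df]] by simp
  finally show ?thesis by (simp add: v_def inner_commute)
qed

lemma pd_hvd:
  fixes G :: "v3 \<Rightarrow> v3" and x :: v3 and i :: 3
  assumes "(G has_derivative D) (at x)"
  shows "((\<lambda>h. G (x + h *\<^sub>R axis i 1)) has_vector_derivative D (axis i 1)) (at 0)"
proof -
  have lin: "linear D" using has_derivative_linear[OF assms] .
  have d1: "((\<lambda>h::real. x + h *\<^sub>R axis i 1) has_derivative (\<lambda>h. h *\<^sub>R axis i 1)) (at 0)"
    by (auto intro!: derivative_eq_intros)
  have "(G has_derivative D) (at (x + 0 *\<^sub>R axis i (1::real)))" using assms by simp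
  from has_derivative_compose[OF d1 this]
  show ?thesis
    unfolding has_vector_derivative_def using linear_scale[OF lin] by simp
qed

lemma curl_zero:
  fixes G :: "v3 \<Rightarrow> v3" and \<phi> :: "v3 \<Rightarrow> real"
  assumes rad: "radial \<phi>" and G: "\<And>y. G y = \<phi> y *\<^sub>R (y /\<^sub>R norm y)"
    and dG: "\<And>y. G differentiable (at y)"
  shows "curl G x = 0"
proof -
  have comp: "pd i G x $ k = pd k G x $ i" for i k
  proof (cases "x = 0")
    case True
    have z: "pd i G 0 $ k = 0" if "i \<noteq> k" for i k
    proof -
      obtain D where D: "(G has_derivative D) (at 0)" using dG[of 0] unfolding differentiable_def by blast
      have h1: "((\<lambda>h. G (0 + h *\<^sub>R axis i 1) $ k) has_vector_derivative D (axis i 1) $ k) (at 0)"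
        by (rule bounded_linear.has_vector_derivative[OF bounded_linear_vec_nth pd_hvd[OF D]])
      have "(\<lambda>h. G (0 + h *\<^sub>R axis i 1) $ k) = (\<lambda>h. 0)"
        using that by (simp add: G axis_def)
      with h1 have "D (axis i 1) $ k = 0"
        using vector_derivative_unique_at[OF _ has_vector_derivative_const] by metis
      then show ?thesis using pd_eq[OF D] by simp
    qed
    show ?thesis
      using True z[of i k] z[of k i] by (cases "i = k") auto
  next
    case False
    define ph where "ph y = \<phi> y / norm y" for y
    have Gph: "G y = ph y *\<^sub>R y" for y by (simp add: G ph_def divide_inverse)
    have ph_eq: "ph y = (G y \<bullet> y) / (y \<bullet> y)" for y
    proof (cases "y = 0")
      case True then show ?thesis by (simp add: ph_def)
    next
      case False
      then have "y \<bullet> y \<noteq> 0" by simp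
      then show ?thesis by (simp only: Gph inner_scaleR_left) simp
    qed
    have radph: "radial ph" using rad unfolding radial_def ph_def by metis
    have "(\<lambda>y. (G y \<bullet> y) / (y \<bullet> y)) differentiable (at x)"
      using dG[of x] False by (intro differentiable_divide differentiable_inner differentiable_ident) auto
    then obtain f' where df': "(ph has_derivative f') (at x)"
      unfolding differentiable_def ph_eq[abs_def] by blast
    have dG': "(G has_derivative (\<lambda>h. ph x *\<^sub>R h + f' h *\<^sub>R x)) (at x)"
      unfolding Gph[abs_def] by (rule has_derivative_scaleR[OF df' has_derivative_ident])
    have f'e: "f' (axis j 1) = (x $ j / norm x) * f' (sgn x)" for j
      using radial_deriv[OF radph df' False, of "axis j 1"] by (simp add: inner_axis' sgn_div_norm divide_inverse)
    have e: "pd i G x $ k = ph x * (if k = i then 1 else 0) + x$i * x$k * (f' (sgn x) / norm x)" for i k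
      unfolding pd_eq[OF dG'] by (simp add: f'e) (simp add: axis_def)
    show ?thesis unfolding e by (cases "i = k") (auto simp: ac_simps)
  qed
  have "curl G x = vector [0, 0, 0]"
    unfolding curl_def using comp[of 2 3] comp[of 3 1] comp[of 1 2] by simp
  then show ?thesis by (simp add: vec_eq_iff forall_3 vector_3)
qed


lemma C2_diff:
  fixes H :: "st \<Rightarrow> v3" and c :: "v3 \<Rightarrow> real"
  assumes "C2 H" "\<And>y. c differentiable (at y)"
  shows "(\<lambda>y. H (y, c y)) differentiable (at y)"
proof -
  obtain DH :: "st \<Rightarrow> st \<Rightarrow>\<^sub>L v3" where dH: "\<And>z. (H has_derivative blinfun_apply (DH z)) (at z)"
    using assms(1) unfolding C2_def by blast
  obtain c' where dc: "(c has_derivative c') (at y)" using assms(2)[of y] unfolding differentiable_def by blast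
  have "((\<lambda>y. (y, c y)) has_derivative (\<lambda>h. (h, c' h))) (at y)"
    by (intro has_derivative_Pair has_derivative_ident dc)
  from has_derivative_compose[OF this dH]
  show ?thesis unfolding differentiable_def by blast
qed

lemma curl_curl_zero:
  fixes G :: "v3 \<Rightarrow> v3" and \<phi> :: "v3 \<Rightarrow> real"
  assumes rad: "radial \<phi>" and G: "\<And>y. G y = \<phi> y *\<^sub>R (y /\<^sub>R norm y)"
    and dG: "\<And>y. G differentiable (at y)"
  shows "curl (curl G) x = 0"
proof -
  have "curl G = (\<lambda>_. 0)" using curl_zero[OF rad G dG] by auto
  moreover have "curl (\<lambda>_. 0) x = 0"
    by (rule curl_zero[where \<phi> = "\<lambda>_. 0"]) (auto simp: radial_def)
  ultimately show ?thesis by simp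
qed

theorem lemma2p3:
  fixes p sg :: real
    and s q V a :: "real^3 \<Rightarrow> real"
    and U :: "real^3 \<Rightarrow> real \<Rightarrow> real^3"
  assumes "p > 1"
    and "sg = 1 \<or> sg = -1"
    and "radial s" "radial q" "radial V"
    and "C2 s" "C2 q" "C2 V"
    and "\<forall>x. s x > 0" "\<forall>x. q x > 0" "\<forall>x. V x > 0"
    and "\<exists>\<psi> :: real \<Rightarrow> real \<Rightarrow> real. \<forall>x t. U x t = \<psi> (norm x) t *\<^sub>R (x /\<^sub>R norm x)"
    and "is_solution s q V p sg U"
    and "radial a" "C2 a"
  shows "is_solution s q V p sg (\<lambda>x t. U x (t + a x))"
proof -
  obtain \<psi> :: "real \<Rightarrow> real \<Rightarrow> real" where psi: "\<And>x t. U x t = \<psi> (norm x) t *\<^sub>R (x /\<^sub>R norm x)"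
    using assms(12) by blast
  have C2U: "C2 (\<lambda>(x, t). U x t)" and eq: "\<And>x t. s x *\<^sub>R dtt U x t + curl (curl (\<lambda>y. U y t)) x + q x *\<^sub>R U x t
            + (sg * V x * norm (U x t) powr (p - 1)) *\<^sub>R U x t = 0"
    using assms(13) unfolding is_solution_def by auto
  have C2a: "C2 (\<lambda>z. (\<lambda>(x, t). U x t) (fst z, snd z + a (fst z)))"
    by (rule C2_shift[OF C2U assms(15)])
  have C2a': "C2 (\<lambda>(x, t). U x (t + a x))"
    using C2a by (simp add: case_prod_beta')
  have da: "a differentiable (at y)" for y
    using assms(15) unfolding C2_def differentiable_def by blast
  have cc1: "curl (curl (\<lambda>y. U y t)) x = 0" for x t
  proof -
    have "(\<lambda>y. (\<lambda>(x, t). U x t) (y, (\<lambda>_. t) y)) differentiable (at y)" for y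
      by (rule C2_diff[OF C2U]) simp
    then show ?thesis
      by (intro curl_curl_zero[where \<phi> = "\<lambda>y. \<psi> (norm y) t"]) (auto simp: radial_def psi)
  qed
  have cc2: "curl (curl (\<lambda>y. U y (t + a y))) x = 0" for x t
  proof -
    have "(\<lambda>y. (\<lambda>(x, t). U x t) (y, (\<lambda>y. t + a y) y)) differentiable (at y)" for y
      by (rule C2_diff[OF C2U]) (intro differentiable_add differentiable_const da)
    moreover have "radial (\<lambda>y. \<psi> (norm y) (t + a y))"
      using assms(14) unfolding radial_def by metis
    ultimately show ?thesis
      by (intro curl_curl_zero[where \<phi> = "\<lambda>y. \<psi> (norm y) (t + a y)"]) (auto simp: psi)
  qed
  show ?thesis
    unfolding is_solution_def
  proof (intro conjI allI)
    show "C2 (\<lambda>(x, t). U x (t + a x))" by (rule C2a')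
    fix x t
    show "s x *\<^sub>R dtt (\<lambda>x t. U x (t + a x)) x t + curl (curl (\<lambda>y. U y (t + a y))) x + q x *\<^sub>R U x (t + a x)
            + (sg * V x * norm (U x (t + a x)) powr (p - 1)) *\<^sub>R U x (t + a x) = 0"
      using eq[of x "t + a x"] unfolding dtt_shift cc1 cc2 .
  qed
qed

end
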